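(* For real $J_1,J_2,J_3$, the vertex model on the periodic honeycomb lattice with the signature $$(r(000),\dots,r(111))=\big(e^{2(J_1+J_2+J_3)},e^{2J_3},e^{2J_2},e^{2J_1},e^{2J_1},e^{2J_2},e^{2J_3},e^{2(J_1+J_2+J_3)}\big)$$ at every vertex is orthogonally realizable.
   Context: Signatures are indexed by local configurations $000,001,\dots,111$ of the incident $(a,b,c)$-edges. A realization assigns to each edge an invertible $2\times2$ matrix $T_e$ and to each vertex a matchgate signature $m_v$ with $m_v=(T_a\otimes T_b\otimes T_c)r_v$ at black and $m_v=((T_a\otimes T_b\otimes T_c)^t)^{-1}r_v$ at white vertices, each $m_v$ satisfying the parity constraint (vanishing on all binary strings of one parity); the model is orthogonally realizable if a realization exists with all $T_e$ orthogonal. *)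

theory Defs
  imports "HOL-Analysis.Analysis"
begin

text \<open>Local configurations of the three incident edges (a,b,c) of a vertex are
  triples of bits (x_a, x_b, x_c); False = 0, True = 1.  A signature is a vector
  indexed by these 8 configurations.\<close>

type_synonym cfg = "bool \<times> bool \<times> bool"
type_synonym sigvec = "complex ^ cfg"
type_synonym mat2 = "complex ^ bool ^ bool"
type_synonym mat8 = "complex ^ cfg ^ cfg"

definition cfg_index :: "cfg \<Rightarrow> nat" where
  "cfg_index s = (case s of (x, y, z) \<Rightarrow> 4 * of_bool x + 2 * of_bool y + of_bool z)"

definition hamming_weight :: "cfg \<Rightarrow> nat" where
  "hamming_weight s = (case s of (x, y, z) \<Rightarrow> of_bool x + of_bool y + of_bool z)"

definition sig_of_list :: "complex list \<Rightarrow> sigvec" where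
  "sig_of_list l = (\<chi> s. l ! cfg_index s)"

definition ising_sig :: "real \<Rightarrow> real \<Rightarrow> real \<Rightarrow> sigvec" where
  "ising_sig J1 J2 J3 = sig_of_list (map (\<lambda>t. complex_of_real (exp t))
     [2*(J1+J2+J3), 2*J3, 2*J2, 2*J1, 2*J1, 2*J2, 2*J3, 2*(J1+J2+J3)])"

definition kron3 :: "mat2 \<Rightarrow> mat2 \<Rightarrow> mat2 \<Rightarrow> mat8" where
  "kron3 A B C = (\<chi> s x. (case s of (s1, s2, s3) \<Rightarrow> case x of (x1, x2, x3) \<Rightarrow>
      A $ s1 $ x1 * B $ s2 $ x2 * C $ s3 $ x3))"

definition parity_ok :: "sigvec \<Rightarrow> bool" where
  "parity_ok m \<longleftrightarrow> (\<forall>s. even (hamming_weight s) \<longrightarrow> m $ s = 0)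
                 \<or> (\<forall>s. odd (hamming_weight s) \<longrightarrow> m $ s = 0)"

text \<open>Periodic honeycomb lattice with M x N fundamental cells (a torus).
  Black vertices (i,j) and white vertices (i,j), 0 \<le> i < M, 0 \<le> j < N.
  Edge (k,i,j), k \<in> {0,1,2} (= a,b,c), is the k-edge of black vertex (i,j):
  a-edge (0,i,j) joins black (i,j) to white (i,j);
  b-edge (1,i,j) joins black (i,j) to white ((i+1) mod M, j);
  c-edge (2,i,j) joins black (i,j) to white (i, (j+1) mod N).
  Hence white (i,j) has a-edge (0,i,j), b-edge (1,(i+M-1) mod M,j),
  c-edge (2,i,(j+N-1) mod N).\<close>

definition honeycomb_realization ::
  "nat \<Rightarrow> nat \<Rightarrow> (nat \<Rightarrow> nat \<Rightarrow> sigvec) \<Rightarrow> (nat \<Rightarrow> nat \<Rightarrow> sigvec)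
   \<Rightarrow> (nat \<Rightarrow> nat \<Rightarrow> nat \<Rightarrow> mat2) \<Rightarrow> bool" where
  "honeycomb_realization M N rB rW T \<longleftrightarrow>
     (\<forall>k<3. \<forall>i<M. \<forall>j<N. invertible (T k i j)) \<and>
     (\<forall>i<M. \<forall>j<N.
        parity_ok (kron3 (T 0 i j) (T 1 i j) (T 2 i j) *v rB i j)) \<and>
     (\<forall>i<M. \<forall>j<N.
        parity_ok (matrix_inv (transpose
           (kron3 (T 0 i j) (T 1 ((i + M - 1) mod M) j) (T 2 i ((j + N - 1) mod N))))
           *v rW i j))"

definition honeycomb_orth_realizable ::
  "nat \<Rightarrow> nat \<Rightarrow> (nat \<Rightarrow> nat \<Rightarrow> sigvec) \<Rightarrow> (nat \<Rightarrow> nat \<Rightarrow> sigvec) \<Rightarrow> bool" where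
  "honeycomb_orth_realizable M N rB rW \<longleftrightarrow>
     (\<exists>T. honeycomb_realization M N rB rW T \<and>
          (\<forall>k<3. \<forall>i<M. \<forall>j<N. orthogonal_matrix (T k i j)))"

end

theory Submission
  imports Defs
begin

definition hc :: complex where "hc = complex_of_real (inverse (sqrt 2))"
definition Hm :: mat2 where "Hm = (\<chi> i j. if i \<and> j then - hc else hc)"
definition Km :: mat8 where "Km = kron3 Hm Hm Hm"

lemma hc_sq: "hc * hc = 1/2"
proof -
  have "inverse (sqrt 2) * inverse (sqrt 2) = (1/2::real)"
    by (simp add: field_simps)
  then show ?thesis unfolding hc_def
    by (metis of_real_mult of_real_divide of_real_1 of_real_numeral)
qed

lemma Hm_sym: "transpose Hm = Hm"
  by (simp add: Hm_def transpose_def vec_eq_iff conj_commute)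

lemma Hm_sq: "Hm ** Hm = mat 1"
proof -
  have "(Hm ** Hm) $ i $ j = mat 1 $ i $ j" for i j
    unfolding matrix_matrix_mult_def Hm_def mat_def
    by (cases i; cases j; simp add: UNIV_bool hc_sq)
  then show ?thesis by (simp add: vec_eq_iff)
qed

lemma Hm_orth: "orthogonal_matrix Hm"
  by (simp add: orthogonal_matrix_def Hm_sym Hm_sq)

lemma Hm_inv: "invertible Hm"
  unfolding invertible_def using Hm_sq by blast

lemma sum_cfg: "(\<Sum>s\<in>(UNIV::cfg set). f s) = (\<Sum>a\<in>UNIV. \<Sum>b\<in>UNIV. \<Sum>c\<in>UNIV. f (a,b,c))"
proof -
  have "sum f (UNIV::cfg set) = sum f (UNIV \<times> (UNIV \<times> UNIV))" by (simp only: UNIV_Times_UNIV)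
  also have "\<dots> = (\<Sum>a\<in>UNIV. sum (\<lambda>p. f (a,p)) (UNIV \<times> UNIV))" by (rule sum.cartesian_product')
  also have "\<dots> = (\<Sum>a\<in>UNIV. \<Sum>b\<in>UNIV. \<Sum>c\<in>UNIV. f (a,b,c))" by (simp only: sum.cartesian_product')
  finally show ?thesis .
qed
lemma mm: "((P::'a::semiring_1^'n^'m) ** Q) $ i $ j = (\<Sum>k\<in>UNIV. P$i$k * Q$k$j)"
  by (simp only: matrix_matrix_mult_def vec_lambda_beta)
lemma kent: "kron3 P Q R $ (a,b,c) $ (d,e,f) = P$a$d * Q$b$e * R$c$f"
  by (simp add: kron3_def)
lemma rearr: "((a::complex)*b*c)*(d*e*f) = (a*d)*((b*e)*(c*f))"
  by (simp only: mult.assoc mult.left_commute)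
lemma kron3_mult: "kron3 A B C ** kron3 A' B' C' = kron3 (A**A') (B**B') (C**C')"
proof -
  have h: "(kron3 A B C ** kron3 A' B' C') $ (s1,s2,s3) $ (x1,x2,x3) = kron3 (A**A') (B**B') (C**C') $ (s1,s2,s3) $ (x1,x2,x3)" for s1 s2 s3 x1 x2 x3
  proof -
    have "(kron3 A B C ** kron3 A' B' C') $ (s1,s2,s3) $ (x1,x2,x3)
       = (\<Sum>a\<in>UNIV. \<Sum>b\<in>UNIV. \<Sum>c\<in>UNIV. (A$s1$a * A'$a$x1) * ((B$s2$b * B'$b$x2) * (C$s3$c * C'$c$x3)))"
      unfolding mm sum_cfg kent rearr ..
    also have "\<dots> = (\<Sum>a\<in>UNIV. A$s1$a * A'$a$x1) * ((\<Sum>b\<in>UNIV. B$s2$b * B'$b$x2) * (\<Sum>c\<in>UNIV. C$s3$c * C'$c$x3))"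
      by (simp only: sum_distrib_right, simp only: sum_distrib_left)
    also have "\<dots> = kron3 (A**A') (B**B') (C**C') $ (s1,s2,s3) $ (x1,x2,x3)"
      unfolding kent mm mult.assoc ..
    finally show ?thesis .
  qed
  have "(kron3 A B C ** kron3 A' B' C') $ i $ j = kron3 (A**A') (B**B') (C**C') $ i $ j" for i j :: cfg
    using h[of "fst i" "fst (snd i)" "snd (snd i)" "fst j" "fst (snd j)" "snd (snd j)"] by simp
  then show ?thesis unfolding vec_eq_iff by blast
qed

lemma kron3_id: "kron3 (mat 1) (mat 1) (mat 1) = mat 1"
  by (auto simp: kron3_def mat_def vec_eq_iff)

lemma Km_sq: "Km ** Km = mat 1"
  by (simp add: Km_def kron3_mult Hm_sq kron3_id)

lemma Km_sym: "transpose Km = Km"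
proof -
  have "Hm $ i $ j = Hm $ j $ i" for i j by (simp add: Hm_def conj_commute)
  then show ?thesis
    by (auto simp: Km_def kron3_def transpose_def vec_eq_iff split: prod.splits)
qed

lemma Km_inv: "matrix_inv (transpose Km) = Km"
proof -
  have ex: "Km ** Km = mat 1 \<and> Km ** Km = mat 1" using Km_sq by simp
  have "Km ** (matrix_inv Km) = mat 1 \<and> matrix_inv Km ** Km = mat 1"
    unfolding matrix_inv_def by (rule someI[of _ Km]) (use ex in simp)
  then have "matrix_inv Km = matrix_inv Km ** (Km ** Km)" "matrix_inv Km ** Km = mat 1"
    using Km_sq by (simp_all add: matrix_mul_rid)
  then have "matrix_inv Km = Km"
    by (metis matrix_mul_assoc matrix_mul_lid)
  then show ?thesis by (simp add: Km_sym)
qed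

definition flip :: "cfg \<Rightarrow> cfg" where "flip s = (case s of (a,b,c) \<Rightarrow> (\<not>a,\<not>b,\<not>c))"

lemma flip_flip[simp]: "flip (flip s) = s"
  by (cases s) (simp add: flip_def)

lemma Hm_flip: "Hm $ x $ (\<not> s) = (if x then - (Hm $ x $ s) else Hm $ x $ s)"
  by (simp add: Hm_def)

lemma Km_flip:
  assumes "odd (hamming_weight x)"
  shows "Km $ x $ flip s = - (Km $ x $ s)"
proof -
  obtain x1 x2 x3 where x: "x = (x1,x2,x3)" by (cases x) auto
  obtain s1 s2 s3 where s: "s = (s1,s2,s3)" by (cases s) auto
  show ?thesis using assms unfolding x s Km_def kron3_def flip_def
    by (cases x1; cases x2; cases x3; simp add: Hm_flip hamming_weight_def)
qed

lemma sig_flip: "ising_sig J1 J2 J3 $ flip s = ising_sig J1 J2 J3 $ s"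
proof -
  obtain s1 s2 s3 where s: "s = (s1,s2,s3)" by (cases s) auto
  show ?thesis unfolding s flip_def ising_sig_def sig_of_list_def
    by (cases s1; cases s2; cases s3; simp add: cfg_index_def)
qed

lemma Km_parity:
  "parity_ok (Km *v ising_sig J1 J2 J3)"
proof -
  let ?v = "ising_sig J1 J2 J3"
  have "(Km *v ?v) $ x = 0" if odd: "odd (hamming_weight x)" for x
  proof -
    let ?f = "\<lambda>s. Km $ x $ s * ?v $ s"
    have "(\<Sum>s\<in>UNIV. ?f s) = (\<Sum>s\<in>UNIV. ?f (flip s))"
      by (rule sum.reindex_bij_witness[of _ flip flip]) auto
    also have "\<dots> = - (\<Sum>s\<in>UNIV. ?f s)"
      by (simp add: Km_flip[OF odd] sig_flip sum_negf)
    finally have "(\<Sum>s\<in>UNIV. ?f s) = 0" by simp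
    then show ?thesis by (simp add: matrix_vector_mult_def)
  qed
  then show ?thesis unfolding parity_ok_def by auto
qed

theorem mainTheorem17:
  fixes J1 J2 J3 :: real and M N :: nat
  assumes "M \<ge> 1" and "N \<ge> 1"
  shows "honeycomb_orth_realizable M N (\<lambda>i j. ising_sig J1 J2 J3) (\<lambda>i j. ising_sig J1 J2 J3)"
  unfolding honeycomb_orth_realizable_def
proof (rule exI[of _ "\<lambda>k i j. Hm"], intro conjI)
  show "honeycomb_realization M N (\<lambda>i j. ising_sig J1 J2 J3) (\<lambda>i j. ising_sig J1 J2 J3) (\<lambda>k i j. Hm)"
    unfolding honeycomb_realization_def
    using Hm_inv Km_parity Km_inv by (simp add: Km_def)
  show "\<forall>k<3. \<forall>i<M. \<forall>j<N. orthogonal_matrix Hm" using Hm_orth by simp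
qed

end
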